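(* Let $k\ge2$, $N_2=m\ge1$, $N_1=n+1-mk\ge0$, $\eta\in\mathbb C$ with $\hbar=k\eta$, $t=e^{\eta/2}$, $q=e^{\hbar/2}$ (so $q=t^k$). Let $S_0=\bigsqcup_{\ell=1}^{N_2}S_\ell$ with $S_\ell=\{e_{N_1+k(\ell-1)+j}-e_{N_1+k(\ell-1)+j+1}: j=1,\dots,k-1\}$, so $\mathcal D_0=\{x\in V: x_j-x_{j+1}=\eta$ whenever $e_j-e_{j+1}\in S_0\}$, and use the coordinates $x_1,\dots,x_{N_1}$ and $y_\ell=\frac1k\sum_{s=0}^{k-1}x_{N_1+k\ell-s}-\frac{k-1}2\eta$ ($\ell=1,\dots,N_2$) on $\mathcal D_0$ (so $x_{N_1+k\ell-s}=y_\ell+s\eta$ there). Then the restriction of $$M=\sum_{i=1}^{n+1}\prod_{j\ne i}\frac{te^{x_j-x_i}-t^{-1}}{e^{x_j-x_i}-1}\,\mathsf T^\hbar_{x_i}$$ to $\mathcal D_0$ is well defined and equals $$\overline M=\sum_{i=1}^{N_1}\prod_{j=1,j\ne i}^{N_1}\frac{te^{x_j-x_i}-t^{-1}}{e^{x_j-x_i}-1}\prod_{\ell'=1}^{N_2}\frac{qe^{y_{\ell'}-x_i}-q^{-1}}{e^{y_{\ell'}-x_i}-1}\,\mathsf T^\hbar_{x_i}+\frac{q-q^{-1}}{t-t^{-1}}\sum_{\ell=1}^{N_2}\prod_{j=1}^{N_1}\frac{te^{x_j-y_\ell}-t^{-1}}{e^{x_j-y_\ell}-1}\prod_{\ell'\ne\ell}\frac{qe^{y_{\ell'}-y_\ell}-q^{-1}}{e^{y_{\ell'}-y_\ell}-1}\,\mathsf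 T^\eta_{y_\ell}.$$
   Context: $R=A_n=\{e_i-e_j:i\ne j\}$ realized in $V=\{x=\sum_{i=1}^{n+1}x_ie_i\in\mathbb C^{n+1}:\sum x_i=0\}$, $\{e_i\}$ orthonormal. Functions on $V$ are regarded as functions of $x_1,\dots,x_{n+1}$ invariant under simultaneous shift of all variables; $\mathsf T^a_z$ denotes the shift $z\mapsto z+a$ in the variable $z$, so $\mathsf T^\hbar_{x_i}=\tau(-\hat e_i)$ where $\hat e_i$ is the orthogonal projection of $e_i$ onto $V$ and $(\tau(\lambda)f)(x)=f(x-\hbar\lambda)$. $\hbar\in\mathbb C\setminus\pi i\mathbb Q$. For $S_0$ a set of simple roots, $\overline V=\{x\in V:(\alpha,x)=0\ \forall\alpha\in S_0\}$ and $\bar\lambda$ the orthogonal projection onto $\overline V$. The restriction of a difference operator $D=\sum_\lambda g_\lambda\tau(\lambda)$ to $\mathcal D_0$ is $\overline D=\sum_{\lambda'}\big(\sum_{\bar\lambda=\lambda'}g_\lambda\big)\big|_{\mathcal D_0}\tau(\lambda')$, provided each such restricted coefficient is a well-defined meromorphic function on $\mathcal D_0$. *)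

theory Defs
  imports "HOL-Analysis.Analysis"
begin

text \<open>Vectors of C^(n+1) are functions nat => complex, indices 1..n+1
  (components outside 1..n+1 are irrelevant / zero for elements of V).
  A difference operator  sum_lam g_lam tau(lam)  is represented by the map
  lam |-> g_lam (coefficient functions); only finitely many are nonzero.\<close>

type_synonym vec = "nat \<Rightarrow> complex"
type_synonym diffop = "vec \<Rightarrow> vec \<Rightarrow> complex"

definition Vsp :: "nat \<Rightarrow> vec set" where
  "Vsp n = {x. (\<forall>i. i \<notin> {1..n+1} \<longrightarrow> x i = 0) \<and> (\<Sum>i=1..n+1. x i) = 0}"

definition binner :: "nat \<Rightarrow> vec \<Rightarrow> vec \<Rightarrow> complex" where
  "binner n x y = (\<Sum>i=1..n+1. x i * y i)"

text \<open>Indices j such that e_j - e_(j+1) belongs to S_0 = union of the S_l.\<close>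
definition S0idx :: "nat \<Rightarrow> nat \<Rightarrow> nat \<Rightarrow> nat set" where
  "S0idx N1 m k = {N1 + k*(l-1) + j | l j. l \<in> {1..m} \<and> j \<in> {1..k-1}}"

definition Vbar :: "nat \<Rightarrow> nat \<Rightarrow> nat \<Rightarrow> nat \<Rightarrow> vec set" where
  "Vbar n N1 m k = {x \<in> Vsp n. \<forall>j\<in>S0idx N1 m k. x j - x (Suc j) = 0}"

definition proj :: "nat \<Rightarrow> nat \<Rightarrow> nat \<Rightarrow> nat \<Rightarrow> vec \<Rightarrow> vec" where
  "proj n N1 m k lam = (THE mu. mu \<in> Vbar n N1 m k \<and>
      (\<forall>v\<in>Vbar n N1 m k. binner n (\<lambda>i. lam i - mu i) v = 0))"

definition D0 :: "nat \<Rightarrow> nat \<Rightarrow> nat \<Rightarrow> nat \<Rightarrow> complex \<Rightarrow> vec set" where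
  "D0 n N1 m k eta = {x \<in> Vsp n. \<forall>j\<in>S0idx N1 m k. x j - x (Suc j) = eta}"

text \<open>Coefficient of tau(lam') in the restriction of D (to be evaluated at points of D0).\<close>
definition restr :: "nat \<Rightarrow> nat \<Rightarrow> nat \<Rightarrow> nat \<Rightarrow> diffop \<Rightarrow> diffop" where
  "restr n N1 m k D lam' x =
     (\<Sum>lam \<in> {lam. D lam \<noteq> (\<lambda>_. 0) \<and> proj n N1 m k lam = lam'}. D lam x)"

text \<open>The shift vector lam in V such that tau(lam) f (x) = f(x - hbar lam) = f(x + d),
  modulo simultaneous shift of all variables.\<close>
definition shiftop :: "nat \<Rightarrow> complex \<Rightarrow> vec \<Rightarrow> vec" where
  "shiftop n hbar d = (\<lambda>i. if i \<in> {1..n+1}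
      then - (d i - (\<Sum>j=1..n+1. d j) / of_nat (n+1)) / hbar else 0)"

text \<open>T^a_(x_i): shift of the variable x_i by a (for a = hbar this is tau(- hat e_i)).\<close>
definition Tsh :: "nat \<Rightarrow> complex \<Rightarrow> complex \<Rightarrow> nat \<Rightarrow> vec" where
  "Tsh n hbar a i = shiftop n hbar (\<lambda>j. if j = i then a else 0)"

text \<open>T^a_(y_l) on D0: shifting y_l by a (other coordinates fixed) means shifting all
  x_(N1+k(l-1)+1), ..., x_(N1+kl) by a.\<close>
definition Tblock :: "nat \<Rightarrow> nat \<Rightarrow> nat \<Rightarrow> complex \<Rightarrow> complex \<Rightarrow> nat \<Rightarrow> vec" where
  "Tblock n N1 k hbar a l =
     shiftop n hbar (\<lambda>j. if j \<in> {N1+k*(l-1)+1..N1+k*l} then a else 0)"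

definition cfac :: "complex \<Rightarrow> complex \<Rightarrow> complex" where
  "cfac t u = (t * exp u - inverse t) / (exp u - 1)"

definition Mop :: "nat \<Rightarrow> complex \<Rightarrow> complex \<Rightarrow> diffop" where
  "Mop n t hbar lam x = (\<Sum>i=1..n+1.
      if lam = Tsh n hbar hbar i then (\<Prod>j\<in>{1..n+1}-{i}. cfac t (x j - x i)) else 0)"

definition ycoord :: "nat \<Rightarrow> nat \<Rightarrow> complex \<Rightarrow> vec \<Rightarrow> nat \<Rightarrow> complex" where
  "ycoord N1 k eta x l =
     (1 / of_nat k) * (\<Sum>s=0..k-1. x (N1 + k*l - s)) - (of_nat k - 1) / 2 * eta"

definition Mbar :: "nat \<Rightarrow> nat \<Rightarrow> nat \<Rightarrow> nat \<Rightarrow> complex \<Rightarrow> complex \<Rightarrow> complex \<Rightarrow> complex \<Rightarrow> diffop" where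
  "Mbar n N1 m k eta t q hbar lam x =
     (\<Sum>i=1..N1. if lam = Tsh n hbar hbar i then
         (\<Prod>j\<in>{1..N1}-{i}. cfac t (x j - x i)) *
         (\<Prod>l'=1..m. cfac q (ycoord N1 k eta x l' - x i)) else 0)
   + (q - inverse q) / (t - inverse t) *
     (\<Sum>l=1..m. if lam = Tblock n N1 k hbar eta l then
         (\<Prod>j=1..N1. cfac t (x j - ycoord N1 k eta x l)) *
         (\<Prod>l'\<in>{1..m}-{l}. cfac q (ycoord N1 k eta x l' - ycoord N1 k eta x l)) else 0)"

end

theory Submission
  imports Defs
begin

lemma expeta_ne1:
  fixes eta hbar :: complex and k s :: nat
  assumes "hbar = of_nat k * eta" and "\<forall>r\<in>\<rat>. hbar \<noteq> of_real pi * \<i> * r" and "s \<ge> 1"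
  shows "exp (of_nat s * eta) \<noteq> 1"
proof
  assume "exp (of_nat s * eta) = 1"
  then obtain z::int where re: "Re (of_nat s * eta) = 0" and im: "Im (of_nat s * eta) = of_int (2*z) * pi"
    by (auto simp: exp_eq_1)
  have "of_nat s * eta = \<i> * of_real (of_int (2*z) * pi)"
    using re im by (simp add: complex_eq_iff)
  hence "eta = \<i> * of_real (of_int (2*z) * pi) / of_nat s" using assms(3)
    by (simp add: field_simps)
  hence "hbar = of_real pi * \<i> * (of_int (2*z*int k) / of_nat s)"
    using assms(1) by (simp add: field_simps)
  moreover have "(of_int (2*z*int k) / of_nat s :: complex) \<in> \<rat>" by simp
  ultimately show False using assms(2) by blast
qed

lemma expeta_ne1':
  fixes eta hbar :: complex and k s :: nat
  assumes "hbar = of_nat k * eta" and "\<forall>r\<in>\<rat>. hbar \<noteq> of_real pi * \<i> * r" and "s \<ge> 1"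
  shows "exp (- (of_nat s * eta)) \<noteq> 1"
  using expeta_ne1[OF assms] by (simp add: exp_minus)

lemma hbar_ne0:
  fixes hbar :: complex
  assumes "\<forall>r\<in>\<rat>. hbar \<noteq> of_real pi * \<i> * r"
  shows "hbar \<noteq> 0"
  using assms[rule_format, of 0] by simp

lemma S0idxI:
  assumes "1 \<le> l" "l \<le> m" "1 \<le> j" "j \<le> k - 1" "a = N1 + k*(l-1) + j"
  shows "a \<in> S0idx N1 m k"
  using assms unfolding S0idx_def by auto

lemma chain:
  fixes x :: "nat \<Rightarrow> complex"
  assumes S: "\<forall>j\<in>S0idx N1 m k. x j - x (Suc j) = c"
    and l: "1 \<le> l" "l \<le> m" and ab: "N1 + k*(l-1) + 1 \<le> a" "a \<le> b" "b \<le> N1 + k*l"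
  shows "x a = x b + of_nat (b - a) * c"
  using ab
proof (induction "b - a" arbitrary: a)
  case 0
  then show ?case by simp
next
  case (Suc d)
  have "a \<in> S0idx N1 m k"
  proof (rule S0idxI[OF l, of "a - N1 - k*(l-1)"])
    have "k*l = k*(l-1) + k" using l by (cases l) auto
    then show "a - N1 - k * (l - 1) \<le> k - 1" using Suc.prems Suc.hyps by linarith
  qed (use Suc in auto)
  hence "x a - x (Suc a) = c" using S by blast
  hence "x a = x (Suc a) + c" by (simp add: algebra_simps)
  moreover have "x (Suc a) = x b + of_nat (b - Suc a) * c"
    apply (rule Suc.hyps(1)) using Suc.hyps(2) Suc.prems by auto
  moreover have "b - a = Suc (b - Suc a)" using Suc by auto
  ultimately show ?case by (simp add: algebra_simps)
qed

lemma S0idxE: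
  assumes "a \<in> S0idx N1 m k"
  obtains l where "1 \<le> l" "l \<le> m" "N1 + k*(l-1) + 1 \<le> a" "Suc a \<le> N1 + k*l"
proof -
  obtain l j where "a = N1 + k*(l-1) + j" "l \<in> {1..m}" "j \<in> {1..k-1}"
    using assms unfolding S0idx_def by auto
  moreover have "k*l = k*(l-1) + k" using \<open>l \<in> {1..m}\<close> by (cases l) auto
  ultimately show ?thesis using that by auto
qed

lemma blk_unique:
  fixes k l l' a :: nat
  assumes "N1 + k*(l-1) + 1 \<le> a" "a \<le> N1 + k*l" "N1 + k*(l'-1) + 1 \<le> a" "a \<le> N1 + k*l'"
    "1 \<le> l" "1 \<le> l'"
  shows "l = l'"
proof (rule ccontr)
  assume "l \<noteq> l'"
  hence "l < l' \<or> l' < l" by auto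
  thus False
  proof
    assume "l < l'" hence "l \<le> l' - 1" by auto
    hence "k*l \<le> k*(l'-1)" by simp
    thus False using assms by linarith
  next
    assume "l' < l" hence "l' \<le> l - 1" by auto
    hence "k*l' \<le> k*(l-1)" by simp
    thus False using assms by linarith
  qed
qed

lemma Vbar_diff: "u \<in> Vbar n N1 m k \<Longrightarrow> v \<in> Vbar n N1 m k \<Longrightarrow> (\<lambda>i. u i - v i) \<in> Vbar n N1 m k"
proof -
  assume u: "u \<in> Vbar n N1 m k" and v: "v \<in> Vbar n N1 m k"
  have "(\<Sum>i=1..n+1. u i - v i) = (\<Sum>i=1..n+1. u i) - (\<Sum>i=1..n+1. v i)" by (rule sum_subtractf)
  also have "\<dots> = 0" using u v unfolding Vbar_def Vsp_def by simp
  finally show ?thesis using u v unfolding Vbar_def Vsp_def by auto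
qed

lemma Vbar_scale: "v \<in> Vbar n N1 m k \<Longrightarrow> (\<lambda>i. c * v i) \<in> Vbar n N1 m k"
proof -
  assume v: "v \<in> Vbar n N1 m k"
  have "(\<Sum>i=1..n+1. c * v i) = c * (\<Sum>i=1..n+1. v i)" by (rule sum_distrib_left[symmetric])
  also have "\<dots> = 0" using v unfolding Vbar_def Vsp_def by simp
  finally show ?thesis using v unfolding Vbar_def Vsp_def by (auto simp: right_diff_distrib[symmetric])
qed

lemma Vbar_cnj: "v \<in> Vbar n N1 m k \<Longrightarrow> (\<lambda>i. cnj (v i)) \<in> Vbar n N1 m k"
proof -
  assume v: "v \<in> Vbar n N1 m k"
  have "(\<Sum>i=1..n+1. cnj (v i)) = cnj (\<Sum>i=1..n+1. v i)" by simp
  also have "\<dots> = 0" using v unfolding Vbar_def Vsp_def by simp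
  finally show ?thesis using v unfolding Vbar_def Vsp_def
    by (auto simp flip: complex_cnj_diff)
qed

lemma D0_add: "x \<in> D0 n N1 m k eta \<Longrightarrow> v \<in> Vbar n N1 m k \<Longrightarrow> (\<lambda>i. x i + v i) \<in> D0 n N1 m k eta"
  unfolding Vbar_def Vsp_def D0_def by (auto simp: sum.distrib algebra_simps)

lemma binner_sub: "binner n (\<lambda>i. a i - b i) v = binner n a v - binner n b v"
  unfolding binner_def by (simp add: algebra_simps sum_subtractf)

lemma proj_eq:
  assumes mu: "mu \<in> Vbar n N1 m k" and orth: "\<forall>v\<in>Vbar n N1 m k. binner n (\<lambda>i. lam i - mu i) v = 0"
  shows "proj n N1 m k lam = mu"
  unfolding proj_def
proof (rule the_equality)
  show "mu \<in> Vbar n N1 m k \<and> (\<forall>v\<in>Vbar n N1 m k. binner n (\<lambda>i. lam i - mu i) v = 0)"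
    using assms by blast
next
  fix mu' assume H: "mu' \<in> Vbar n N1 m k \<and> (\<forall>v\<in>Vbar n N1 m k. binner n (\<lambda>i. lam i - mu' i) v = 0)"
  define d where "d = (\<lambda>i. mu' i - mu i)"
  have dV: "d \<in> Vbar n N1 m k" unfolding d_def using H mu by (rule Vbar_diff[OF conjunct1])
  have cV: "(\<lambda>i. cnj (d i)) \<in> Vbar n N1 m k" by (rule Vbar_cnj[OF dV])
  have dd: "d = (\<lambda>i. (lam i - mu i) - (lam i - mu' i))" unfolding d_def by auto
  have "binner n d (\<lambda>i. cnj (d i)) = binner n (\<lambda>i. lam i - mu i) (\<lambda>i. cnj (d i)) - binner n (\<lambda>i. lam i - mu' i) (\<lambda>i. cnj (d i))"
    unfolding dd[THEN arg_cong[where f="binner n"]] by (rule binner_sub)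
  also have "\<dots> = 0" using orth H cV by simp
  finally have "(\<Sum>i=1..n+1. d i * cnj (d i)) = 0" unfolding binner_def .
  moreover have "\<And>i. d i * cnj (d i) = complex_of_real ((cmod (d i))^2)"
    by (rule complex_norm_square[symmetric])
  ultimately have "(\<Sum>i=1..n+1. complex_of_real ((cmod (d i))^2)) = 0"
    by (simp only:)
  hence "(\<Sum>i=1..n+1. (cmod (d i))^2) = 0"
    by (metis of_real_eq_0_iff of_real_sum)
  hence "\<forall>i\<in>{1..n+1}. (cmod (d i))^2 = 0"
    by (subst (asm) sum_nonneg_eq_0_iff) auto
  hence "\<forall>i\<in>{1..n+1}. d i = 0" by simp
  moreover have "\<forall>i. i \<notin> {1..n+1} \<longrightarrow> d i = 0" using dV unfolding Vbar_def Vsp_def by auto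
  ultimately have "\<forall>i. d i = 0" by blast
  thus "mu' = mu" unfolding d_def by auto
qed

lemma mult_eq_div: "P * c = R \<Longrightarrow> c \<noteq> 0 \<Longrightarrow> P = R / (c::complex)"
  by (simp add: eq_divide_eq)

lemma frac_cancel: "X \<noteq> 0 \<Longrightarrow> X / Y * (Z / X) = Z / (Y::complex)"
  by (cases "Y = 0") (simp_all add: field_simps)

lemma tele_alg:
  fixes a e :: complex
  assumes e: "e \<noteq> 0" and ne: "\<forall>s<K. a * e ^ (2 * s) \<noteq> 1"
  shows "(\<Prod>s<K. (e * (a * e ^ (2 * s)) - inverse e) / (a * e ^ (2 * s) - 1)) * (a - 1) = (a * e ^ (2*K) - 1) / e^K"
  using ne
proof (induction K)
  case 0 then show ?case by simp
next
  case (Suc K)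
  have IH: "(\<Prod>s<K. (e * (a * e ^ (2 * s)) - inverse e) / (a * e ^ (2 * s) - 1)) * (a - 1) = (a * e ^ (2*K) - 1) / e^K"
    using Suc by auto
  have nz: "a * e ^ (2*K) - 1 \<noteq> 0" using Suc.prems by auto
  have "(\<Prod>s<Suc K. (e * (a * e ^ (2 * s)) - inverse e) / (a * e ^ (2 * s) - 1)) * (a - 1)
      = ((\<Prod>s<K. (e * (a * e ^ (2 * s)) - inverse e) / (a * e ^ (2 * s) - 1)) * (a - 1)) *
        ((e * (a * e ^ (2*K)) - inverse e) / (a * e ^ (2*K) - 1))" by (simp add: mult_ac)
  also have "\<dots> = (a * e ^ (2*K) - 1) / e^K * ((e * (a * e ^ (2*K)) - inverse e) / (a * e ^ (2*K) - 1))"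
    by (simp only: IH)
  also have "\<dots> = (e * (a * e ^ (2*K)) - inverse e) / e^K" using nz by (rule frac_cancel)
  also have "\<dots> = (a * e ^ (2 * Suc K) - 1) / e ^ (Suc K)" using e by (simp add: field_simps power2_eq_square)
  finally show ?case .
qed

lemma exp_nat_mult: fixes u eta :: complex shows "exp (u + of_nat s * eta) = exp u * exp (eta/2) ^ (2 * s)"
proof -
  have "exp (of_nat s * eta) = exp (of_nat (2 * s) * (eta/2))" by simp
  also have "\<dots> = exp (eta/2) ^ (2 * s)" by (rule exp_of_nat_mult)
  finally show ?thesis by (simp add: exp_add)
qed

lemma tele_q:
  fixes u eta :: complex and K :: nat
  assumes K: "K \<ge> 1" and ne: "\<forall>s<K. exp (u + of_nat s * eta) \<noteq> 1"
  shows "(\<Prod>s<K. cfac (exp (eta/2)) (u + of_nat s * eta)) = cfac (exp (of_nat K * eta / 2)) u"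
proof -
  define e where "e = exp (eta/2)"
  define a where "a = exp u"
  have e0: "e \<noteq> 0" unfolding e_def by simp
  have ne': "\<forall>s<K. a * e ^ (2 * s) \<noteq> 1" using ne unfolding a_def e_def exp_nat_mult by simp
  have a1: "a \<noteq> 1" using ne'[rule_format, of 0] K by simp
  have P: "(\<Prod>s<K. cfac (exp (eta/2)) (u + of_nat s * eta)) = (\<Prod>s<K. (e * (a * e ^ (2 * s)) - inverse e) / (a * e ^ (2 * s) - 1))"
    unfolding cfac_def exp_nat_mult a_def e_def by simp
  have q: "exp (of_nat K * eta / 2) = e ^ K" unfolding e_def
    by (metis exp_of_nat_mult times_divide_eq_right)
  have "(\<Prod>s<K. (e * (a * e ^ (2 * s)) - inverse e) / (a * e ^ (2 * s) - 1)) = (a * e ^ (2*K) - 1) / e^K / (a - 1)"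
    using mult_eq_div[OF tele_alg[OF e0 ne']] a1 by simp
  also have "\<dots> = cfac (e^K) (u)" unfolding cfac_def a_def[symmetric] using e0 a1
    by (simp add: field_simps power_mult power2_eq_square)
  finally show ?thesis unfolding P q .
qed

lemma own_block:
  fixes eta :: complex and k :: nat
  assumes k: "k \<ge> 1" and ne: "\<forall>s. s \<ge> 1 \<longrightarrow> exp (of_nat s * eta) \<noteq> 1"
  shows "(\<Prod>s<k. if s = 0 then 1 else cfac (exp (eta/2)) (of_nat s * eta)) =
     (exp (of_nat k * eta / 2) - inverse (exp (of_nat k * eta / 2))) / (exp (eta/2) - inverse (exp (eta/2)))"
proof -
  define e where "e = exp (eta/2)"
  have e0: "e \<noteq> 0" unfolding e_def by simp
  have ksuc: "k = Suc (k - 1)" using k by simp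
  have "(\<Prod>s<k. if s = 0 then 1 else cfac (exp (eta/2)) (of_nat s * eta)) =
        (\<Prod>s<k-1. cfac (exp (eta/2)) (of_nat (Suc s) * eta))"
    by (subst ksuc, subst prod.lessThan_Suc_shift) simp
  also have "\<dots> = (\<Prod>s<k-1. (e * (e^2 * e ^ (2 * s)) - inverse e) / (e^2 * e ^ (2 * s) - 1))"
  proof (rule prod.cong[OF refl])
    fix s
    have "exp (of_nat (Suc s) * eta) = e^2 * e ^ (2 * s)"
      using exp_nat_mult[of eta s eta] unfolding e_def
      by (simp add: algebra_simps exp_add[symmetric] power2_eq_square exp_double[symmetric])
    then show "cfac (exp (eta/2)) (of_nat (Suc s) * eta) = (e * (e^2 * e ^ (2 * s)) - inverse e) / (e^2 * e ^ (2 * s) - 1)"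
      unfolding cfac_def e_def by simp
  qed
  finally have P: "(\<Prod>s<k. if s = 0 then 1 else cfac (exp (eta/2)) (of_nat s * eta)) =
     (\<Prod>s<k-1. (e * (e^2 * e ^ (2 * s)) - inverse e) / (e^2 * e ^ (2 * s) - 1))" .
  have ne': "\<forall>s<k-1. e^2 * e ^ (2 * s) \<noteq> 1"
  proof (intro allI impI)
    fix s
    have "exp (of_nat (Suc s) * eta) = e^2 * e ^ (2 * s)"
      using exp_nat_mult[of eta s eta] unfolding e_def
      by (simp add: algebra_simps exp_add[symmetric] power2_eq_square exp_double[symmetric])
    then show "e^2 * e ^ (2 * s) \<noteq> 1" using ne[rule_format, of "Suc s"] by simp
  qed
  have e21: "e^2 \<noteq> 1" using ne[rule_format, of 1] unfolding e_def
    by (simp add: power2_eq_square exp_add[symmetric])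
  have q: "exp (of_nat k * eta / 2) = e ^ k" unfolding e_def
    by (metis exp_of_nat_mult times_divide_eq_right)
  have T: "(\<Prod>s<k-1. (e * (e^2 * e ^ (2 * s)) - inverse e) / (e^2 * e ^ (2 * s) - 1)) * (e^2 - 1) = (e^2 * e ^ (2*(k-1)) - 1) / e ^ (k-1)"
    by (rule tele_alg[OF e0 ne'])
  have e21': "e^2 - 1 \<noteq> 0" using e21 by simp
  have ek: "e^k = e * e ^ (k-1)" by (subst ksuc) simp
  have ek2: "e^2 * e ^ (2*(k-1)) = e^k * e^k" by (simp add: ek power_mult_distrib power2_eq_square power_mult mult_ac)
  have "(\<Prod>s<k-1. (e * (e^2 * e ^ (2 * s)) - inverse e) / (e^2 * e ^ (2 * s) - 1)) = (e^k * e^k - 1) / e ^ (k-1) / (e^2 - 1)"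
    using mult_eq_div[OF T e21'] ek2 by simp
  also have "\<dots> = (e^k - inverse (e^k)) / (e - inverse e)"
    using e0 e21' unfolding ek by (simp add: field_simps power2_eq_square)
  finally show ?thesis unfolding P q e_def .
qed

lemma ivl_split: "{a+1..a + Suc M * K} = {a+1..a+M*K} \<union> {a+M*K+1..a+M*K+K}" for a M K :: nat
  by auto

lemma sum_blockrev: "(\<Sum>i\<in>{b+1..b+K}. f i) = (\<Sum>s<K. f (b + K - s))" for f :: "nat \<Rightarrow> complex"
  by (rule sum.reindex_bij_witness[of _ "\<lambda>i. b + K - i" "\<lambda>s. b + K - s"]) auto

lemma prod_blockrev: "(\<Prod>i\<in>{b+1..b+K}. f i) = (\<Prod>s<K. f (b + K - s))" for f :: "nat \<Rightarrow> complex"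
  by (rule prod.reindex_bij_witness[of _ "\<lambda>i. b + K - i" "\<lambda>s. b + K - s"]) auto

lemma sum_blocks: "(\<Sum>i\<in>{a+1..a+M*K}. f i) = (\<Sum>l\<in>{1..M}. \<Sum>s<K. f (a + K*l - s))" for f :: "nat \<Rightarrow> complex"
proof (induction M)
  case 0 then show ?case by simp
next
  case (Suc M)
  have "(\<Sum>i\<in>{a+1..a+Suc M*K}. f i) = (\<Sum>i\<in>{a+1..a+M*K}. f i) + (\<Sum>i\<in>{a+M*K+1..a+M*K+K}. f i)"
    unfolding ivl_split by (rule sum.union_disjoint) auto
  also have "(\<Sum>i\<in>{a+M*K+1..a+M*K+K}. f i) = (\<Sum>s<K. f (a + K * Suc M - s))"
    unfolding sum_blockrev by (simp add: algebra_simps)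
  finally show ?case using Suc by simp
qed

lemma prod_blocks: "(\<Prod>i\<in>{a+1..a+M*K}. f i) = (\<Prod>l\<in>{1..M}. \<Prod>s<K. f (a + K*l - s))" for f :: "nat \<Rightarrow> complex"
proof (induction M)
  case 0 then show ?case by simp
next
  case (Suc M)
  have "(\<Prod>i\<in>{a+1..a+Suc M*K}. f i) = (\<Prod>i\<in>{a+1..a+M*K}. f i) * (\<Prod>i\<in>{a+M*K+1..a+M*K+K}. f i)"
    unfolding ivl_split by (rule prod.union_disjoint) auto
  also have "(\<Prod>i\<in>{a+M*K+1..a+M*K+K}. f i) = (\<Prod>s<K. f (a + K * Suc M - s))"
    unfolding prod_blockrev by (simp add: algebra_simps)
  finally show ?case using Suc by simp
qed

lemma countable_bad:
  fixes a d :: complex assumes d: "d \<noteq> 0"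
  shows "countable {e::real. exp (a + of_real e * d) = 1}"
proof (rule countable_subset)
  show "{e::real. exp (a + of_real e * d) = 1} \<subseteq> range (\<lambda>z::int. Re ((\<i> * of_real (of_int (2*z) * pi) - a) / d))"
  proof
    fix e :: real assume "e \<in> {e. exp (a + of_real e * d) = 1}"
    then obtain z :: int where re: "Re (a + of_real e * d) = 0" and im: "Im (a + of_real e * d) = of_int (2*z) * pi"
      by (auto simp: exp_eq_1)
    have "a + of_real e * d = \<i> * of_real (of_int (2*z) * pi)" using re im by (simp add: complex_eq_iff)
    hence "of_real e = (\<i> * of_real (of_int (2*z) * pi) - a) / d" using d by (simp add: field_simps)
    hence "e = Re ((\<i> * of_real (of_int (2*z) * pi) - a) / d)" by (metis Re_complex_of_real)
    thus "e \<in> range (\<lambda>z::int. Re ((\<i> * of_real (of_int (2*z) * pi) - a) / d))" by blast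
  qed
  show "countable (range (\<lambda>z::int. Re ((\<i> * of_real (of_int (2*z) * pi) - a) / d)))" by simp
qed

locale setting =
  fixes n N1 m k :: nat and eta hbar t q :: complex
  assumes k2: "k \<ge> 2" and m1: "m \<ge> 1" and nN: "n + 1 = N1 + m * k"
    and hk: "hbar = of_nat k * eta"
    and hq: "\<forall>r\<in>\<rat>. hbar \<noteq> of_real pi * \<i> * r"
    and ht: "t = exp (eta / 2)" and hqq: "q = exp (hbar / 2)"
begin

abbreviation "blk l \<equiv> {N1 + k*(l-1) + 1 .. N1 + k*l}"

lemma hbar0: "hbar \<noteq> 0" by (rule hbar_ne0[OF hq])
lemma eta0: "eta \<noteq> 0" using hbar0 hk by auto
lemma k0: "(of_nat k :: complex) \<noteq> 0" using k2 by auto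

lemma blk_sub: "l \<le> m \<Longrightarrow> 1 \<le> l \<Longrightarrow> blk l \<subseteq> {1..n+1}"
proof -
  assume "l \<le> m" "1 \<le> l"
  hence "k*l \<le> k*m" by simp
  thus "blk l \<subseteq> {1..n+1}" using nN by (auto simp: mult.commute)
qed

lemma kl: "1 \<le> l \<Longrightarrow> k*l = k*(l-1) + k" by (cases l) auto

lemma card_blk: "1 \<le> l \<Longrightarrow> card (blk l) = k" using kl[of l] by simp

lemma sum_blk_const: "1 \<le> l \<Longrightarrow> (\<Sum>j\<in>blk l. c) = of_nat k * (c::complex)"
  by (simp only: sum_constant card_blk)

lemma Tsh_eq: "i \<in> {1..n+1} \<Longrightarrow> Tsh n hbar hbar i =
   (\<lambda>j. if j \<in> {1..n+1} then (if j = i then -1 else 0) + 1 / of_nat (n+1) else 0)"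
proof -
  assume i: "i \<in> {1..n+1}"
  have S: "(\<Sum>j=1..n+1. (if j = i then hbar else 0)) = hbar" using i by (simp add: sum.delta')
  show ?thesis unfolding Tsh_def shiftop_def S using hbar0
    by (auto simp: field_simps)
qed

lemma Tblock_eq: "1 \<le> l \<Longrightarrow> l \<le> m \<Longrightarrow> Tblock n N1 k hbar eta l =
   (\<lambda>j. if j \<in> {1..n+1} then (if j \<in> blk l then - 1 / of_nat k else 0) + 1 / of_nat (n+1) else 0)"
proof -
  assume l: "1 \<le> l" "l \<le> m"
  have "(\<Sum>j=1..n+1. (if j \<in> blk l then eta else 0)) = (\<Sum>j\<in>{1..n+1} \<inter> blk l. eta)"
    by (rule sum.inter_restrict[symmetric]) simp
  also have "{1..n+1} \<inter> blk l = blk l" using blk_sub[OF l(2,1)] by blast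
  finally have S: "(\<Sum>j=1..n+1. (if j \<in> blk l then eta else 0)) = of_nat k * eta"
    using sum_blk_const[OF l(1)] by simp
  show ?thesis unfolding Tblock_def shiftop_def S using hbar0 eta0 k0 hk
    by (auto simp: field_simps)
qed

lemma S0idx_props: "j \<in> S0idx N1 m k \<Longrightarrow> \<exists>l. 1 \<le> l \<and> l \<le> m \<and> j \<in> blk l \<and> Suc j \<in> blk l"
  by (erule S0idxE) auto

lemma Tsh_Vbar: "i \<in> {1..N1} \<Longrightarrow> Tsh n hbar hbar i \<in> Vbar n N1 m k"
proof -
  assume i: "i \<in> {1..N1}"
  hence i': "i \<in> {1..n+1}" using nN by auto
  have "(\<Sum>j=1..n+1. (if j = i then -1 else 0) + 1 / of_nat (n+1) :: complex) =
        (\<Sum>j=1..n+1. (if j = i then -1 else 0)) + (\<Sum>j=1..n+1. 1 / of_nat (n+1) :: complex)"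
    by (rule sum.distrib)
  also have "\<dots> = 0" using i' by (simp add: sum.delta' del: of_nat_Suc)
  finally have S: "(\<Sum>j=1..n+1. (if j = i then -1 else 0) + 1 / of_nat (n+1) :: complex) = 0" .
  have B: "\<forall>j\<in>S0idx N1 m k. j \<in> {1..n+1} \<and> Suc j \<in> {1..n+1} \<and> j \<noteq> i \<and> Suc j \<noteq> i"
  proof
    fix j assume "j \<in> S0idx N1 m k"
    then obtain l where l: "1 \<le> l" "l \<le> m" "j \<in> blk l" "Suc j \<in> blk l" using S0idx_props by blast
    thus "j \<in> {1..n+1} \<and> Suc j \<in> {1..n+1} \<and> j \<noteq> i \<and> Suc j \<noteq> i"
      using blk_sub[OF l(2,1)] i by auto
  qed
  show ?thesis unfolding Tsh_eq[OF i'] Vbar_def Vsp_def using S B by auto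
qed

lemma Tblock_Vbar: "1 \<le> l \<Longrightarrow> l \<le> m \<Longrightarrow> Tblock n N1 k hbar eta l \<in> Vbar n N1 m k"
proof -
  assume l: "1 \<le> l" "l \<le> m"
  have "(\<Sum>j=1..n+1. (if j \<in> blk l then - 1 / of_nat k else 0) + 1 / of_nat (n+1) :: complex) =
        (\<Sum>j=1..n+1. (if j \<in> blk l then - 1 / of_nat k else 0)) + (\<Sum>j=1..n+1. 1 / of_nat (n+1) :: complex)"
    by (rule sum.distrib)
  also have "(\<Sum>j=1..n+1. (if j \<in> blk l then - 1 / of_nat k else 0 :: complex)) = (\<Sum>j\<in>{1..n+1} \<inter> blk l. - 1 / of_nat k)"
    by (rule sum.inter_restrict[symmetric]) simp
  also have "{1..n+1} \<inter> blk l = blk l" using blk_sub[OF l(2,1)] by blast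
  also have "(\<Sum>j\<in>blk l. - 1 / of_nat k :: complex) = -1" unfolding sum_blk_const[OF l(1)] using k0 by simp
  finally have S: "(\<Sum>j=1..n+1. (if j \<in> blk l then - 1 / of_nat k else 0) + 1 / of_nat (n+1) :: complex) = 0"
    by (simp del: of_nat_Suc)
  have B: "\<forall>j\<in>S0idx N1 m k. j \<in> {1..n+1} \<and> Suc j \<in> {1..n+1} \<and> (j \<in> blk l \<longleftrightarrow> Suc j \<in> blk l)"
  proof
    fix j assume "j \<in> S0idx N1 m k"
    then obtain l' where l': "1 \<le> l'" "l' \<le> m" "j \<in> blk l'" "Suc j \<in> blk l'" using S0idx_props by blast
    have "j \<in> blk l \<Longrightarrow> l = l'" using blk_unique[of N1 k l j l'] l l' by auto
    moreover have "Suc j \<in> blk l \<Longrightarrow> l = l'" using blk_unique[of N1 k l "Suc j" l'] l l' by auto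
    ultimately show "j \<in> {1..n+1} \<and> Suc j \<in> {1..n+1} \<and> (j \<in> blk l \<longleftrightarrow> Suc j \<in> blk l)"
      using blk_sub[OF l'(2,1)] l' by auto
  qed
  show ?thesis unfolding Tblock_eq[OF l] Vbar_def Vsp_def using S B by auto
qed

lemma proj_free: "i \<in> {1..N1} \<Longrightarrow> proj n N1 m k (Tsh n hbar hbar i) = Tsh n hbar hbar i"
  by (rule proj_eq[OF Tsh_Vbar]) (auto simp: binner_def)

lemma Vbar_blk_const:
  assumes v: "v \<in> Vbar n N1 m k" and l: "1 \<le> l" "l \<le> m" and j: "j \<in> blk l"
  shows "v j = v (N1 + k*l)"
proof -
  have "\<forall>j\<in>S0idx N1 m k. v j - v (Suc j) = 0" using v unfolding Vbar_def by auto
  from chain[OF this l, of j "N1 + k*l"] j show ?thesis by simp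
qed

lemma proj_blk:
  assumes l: "1 \<le> l" "l \<le> m" and i: "i \<in> blk l"
  shows "proj n N1 m k (Tsh n hbar hbar i) = Tblock n N1 k hbar eta l"
proof (rule proj_eq[OF Tblock_Vbar[OF l]], intro ballI)
  fix v assume v: "v \<in> Vbar n N1 m k"
  have i': "i \<in> {1..n+1}" using blk_sub[OF l(2,1)] i by auto
  have "binner n (\<lambda>j. Tsh n hbar hbar i j - Tblock n N1 k hbar eta l j) v =
    (\<Sum>j=1..n+1. (if j = i then - v j else 0) + (if j \<in> blk l then v j / of_nat k else 0))"
    unfolding binner_def Tsh_eq[OF i'] Tblock_eq[OF l]
    by (rule sum.cong) (auto simp: left_diff_distrib)
  also have "\<dots> = (\<Sum>j=1..n+1. (if j = i then - v j else 0)) + (\<Sum>j=1..n+1. (if j \<in> blk l then v j / of_nat k else 0))"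
    by (rule sum.distrib)
  also have "(\<Sum>j=1..n+1. (if j = i then - v j else 0)) = - v i" using i' by (simp add: sum.delta')
  also have "(\<Sum>j=1..n+1. (if j \<in> blk l then v j / of_nat k else 0)) = (\<Sum>j\<in>{1..n+1} \<inter> blk l. v j / of_nat k)"
    by (rule sum.inter_restrict[symmetric]) simp
  also have "{1..n+1} \<inter> blk l = blk l" using blk_sub[OF l(2,1)] by blast
  also have "(\<Sum>j\<in>blk l. v j / of_nat k) = (\<Sum>j\<in>blk l. v (N1 + k*l) / of_nat k)"
    proof (rule sum.cong[OF refl])
    fix j assume "j \<in> blk l"
    then show "v j / of_nat k = v (N1 + k*l) / of_nat k" using Vbar_blk_const[OF v l, of j] by simp
  qed
  also have "\<dots> = v (N1 + k*l)" unfolding sum_blk_const[OF l(1)] using k0 by simp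
  also have "v i = v (N1 + k*l)" by (rule Vbar_blk_const[OF v l i])
  finally show "binner n (\<lambda>j. Tsh n hbar hbar i j - Tblock n N1 k hbar eta l j) v = 0" by simp
qed

definition "P i x = (\<Prod>j\<in>{1..n+1}-{i}. cfac t (x j - x i))"

definition "Gset = {x \<in> D0 n N1 m k eta. \<forall>i\<in>{1..n+1}. \<forall>j\<in>{1..n+1}-{i}. exp (x j - x i) \<noteq> 1}"

lemma nN': "n + 1 = N1 + m * k" by (rule nN)

lemma blk_mem: "1 \<le> l \<Longrightarrow> s < k \<Longrightarrow> N1 + k*l - s \<in> blk l"
  using kl[of l] by auto

lemma D0_S0: "x \<in> D0 n N1 m k eta \<Longrightarrow> \<forall>j\<in>S0idx N1 m k. x j - x (Suc j) = eta"
  unfolding D0_def by auto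

lemma D0_blk: assumes x: "x \<in> D0 n N1 m k eta" and l: "1 \<le> l" "l \<le> m" and s: "s < k"
  shows "x (N1 + k*l - s) = x (N1 + k*l) + of_nat s * eta"
proof -
  have "x (N1 + k*l - s) = x (N1 + k*l) + of_nat (N1 + k*l - (N1 + k*l - s)) * eta"
    by (rule chain[OF D0_S0[OF x] l]) (use blk_mem[OF l(1) s] in auto)
  moreover have "N1 + k*l - (N1 + k*l - s) = s" using kl[of l] l s by auto
  ultimately show ?thesis by simp
qed

lemma gauss2: "(\<Sum>s<K. of_nat s :: complex) * 2 = of_nat K * (of_nat K - 1)"
  by (induction K) (auto simp: algebra_simps)

lemma ycoord_eq: assumes x: "x \<in> D0 n N1 m k eta" and l: "1 \<le> l" "l \<le> m"
  shows "ycoord N1 k eta x l = x (N1 + k*l)"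
proof -
  have iv: "{0..k-1} = {..<k}" using k2 by auto
  have "(\<Sum>s=0..k-1. x (N1 + k*l - s)) = (\<Sum>s<k. x (N1 + k*l) + of_nat s * eta)"
    unfolding iv by (rule sum.cong) (auto simp: D0_blk[OF x l])
  also have "\<dots> = of_nat k * x (N1 + k*l) + (\<Sum>s<k. of_nat s) * eta"
    by (simp add: sum.distrib sum_distrib_right)
  finally have S: "(\<Sum>s=0..k-1. x (N1 + k*l - s)) = of_nat k * x (N1 + k*l) + (\<Sum>s<k. of_nat s) * eta" .
  have g: "(\<Sum>s<k. of_nat s :: complex) = of_nat k * (of_nat k - 1) / 2" using gauss2[of k] by simp
  show ?thesis unfolding ycoord_def S g using k0 by (simp add: field_simps)
qed

lemma Tsh_inj: "i \<in> {1..n+1} \<Longrightarrow> i' \<in> {1..n+1} \<Longrightarrow> Tsh n hbar hbar i = Tsh n hbar hbar i' \<Longrightarrow> i = i'"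
proof (rule ccontr)
  assume i: "i \<in> {1..n+1}" and i': "i' \<in> {1..n+1}" and e: "Tsh n hbar hbar i = Tsh n hbar hbar i'" and ne: "i \<noteq> i'"
  have "Tsh n hbar hbar i i = Tsh n hbar hbar i' i" using e by simp
  thus False unfolding Tsh_eq[OF i] Tsh_eq[OF i'] using i ne by simp
qed

lemma Mop_Tsh: "i \<in> {1..n+1} \<Longrightarrow> Mop n t hbar (Tsh n hbar hbar i) x = P i x"
proof -
  assume i: "i \<in> {1..n+1}"
  have "Mop n t hbar (Tsh n hbar hbar i) x = (\<Sum>i'=1..n+1. if i' = i then P i' x else 0)"
    unfolding Mop_def P_def
  proof (rule sum.cong[OF refl])
    fix i' assume "i' \<in> {1..n+1}"
    then have "(Tsh n hbar hbar i = Tsh n hbar hbar i') = (i' = i)" using Tsh_inj[OF i] by blast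
    then show "(if Tsh n hbar hbar i = Tsh n hbar hbar i' then \<Prod>j\<in>{1..n + 1} - {i'}. cfac t (x j - x i') else 0) =
         (if i' = i then \<Prod>j\<in>{1..n + 1} - {i'}. cfac t (x j - x i') else 0)" by simp
  qed
  also have "\<dots> = P i x" using i by (simp add: sum.delta)
  finally show ?thesis .
qed

lemma Mop_other: "lam \<notin> (\<lambda>i. Tsh n hbar hbar i) ` {1..n+1} \<Longrightarrow> Mop n t hbar lam = (\<lambda>_. 0)"
  unfolding Mop_def by (rule ext) (rule sum.neutral, auto)

lemma restr_eq: "restr n N1 m k (Mop n t hbar) lam' x =
   (\<Sum>i=1..n+1. if proj n N1 m k (Tsh n hbar hbar i) = lam' then P i x else 0)"
proof -
  let ?B = "{lam \<in> (\<lambda>i. Tsh n hbar hbar i) ` {1..n+1}. proj n N1 m k lam = lam'}"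
  let ?A = "{lam. Mop n t hbar lam \<noteq> (\<lambda>_. 0) \<and> proj n N1 m k lam = lam'}"
  have "restr n N1 m k (Mop n t hbar) lam' x = (\<Sum>lam\<in>?A. Mop n t hbar lam x)"
    unfolding restr_def ..
  also have "\<dots> = (\<Sum>lam\<in>?B. Mop n t hbar lam x)"
    by (rule sum.mono_neutral_left) (use Mop_other in auto)
  also have "?B = (\<lambda>i. Tsh n hbar hbar i) ` {i\<in>{1..n+1}. proj n N1 m k (Tsh n hbar hbar i) = lam'}" by auto
  also have "(\<Sum>lam\<in>\<dots>. Mop n t hbar lam x) = (\<Sum>i\<in>{i\<in>{1..n+1}. proj n N1 m k (Tsh n hbar hbar i) = lam'}. Mop n t hbar (Tsh n hbar hbar i) x)"
  proof -
    have inj: "inj_on (\<lambda>i. Tsh n hbar hbar i) {i\<in>{1..n+1}. proj n N1 m k (Tsh n hbar hbar i) = lam'}"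
      by (intro inj_onI) (metis (no_types, lifting) Tsh_inj mem_Collect_eq)
    show ?thesis unfolding sum.reindex[OF inj] o_def by (rule refl)
  qed
  also have "\<dots> = (\<Sum>i\<in>{i\<in>{1..n+1}. proj n N1 m k (Tsh n hbar hbar i) = lam'}. P i x)"
    by (rule sum.cong) (auto simp: Mop_Tsh)
  also have "\<dots> = (\<Sum>i=1..n+1. if proj n N1 m k (Tsh n hbar hbar i) = lam' then P i x else 0)"
    by (rule sum.inter_filter) simp
  finally show ?thesis .
qed

lemma P_split: assumes i: "i \<in> {1..n+1}"
  shows "P i x = (\<Prod>j\<in>{1..N1}. (if j = i then 1 else cfac t (x j - x i))) *
     (\<Prod>l\<in>{1..m}. \<Prod>s<k. (if N1 + k*l - s = i then 1 else cfac t (x (N1 + k*l - s) - x i)))"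
proof -
  define g where "g j = (if j = i then 1 else cfac t (x j - x i))" for j
  have "P i x = (\<Prod>j\<in>{1..n+1}-{i}. g j)" unfolding P_def g_def by (rule prod.cong) auto
  also have "\<dots> = g i * (\<Prod>j\<in>{1..n+1}-{i}. g j)" unfolding g_def by simp
  also have "\<dots> = (\<Prod>j\<in>{1..n+1}. g j)" by (rule prod.remove[symmetric]) (use i in auto)
  also have "{1..n+1} = {1..N1} \<union> {N1+1..N1+m*k}" using nN by auto
  also have "(\<Prod>j\<in>\<dots>. g j) = (\<Prod>j\<in>{1..N1}. g j) * (\<Prod>j\<in>{N1+1..N1+m*k}. g j)"
    by (rule prod.union_disjoint) auto
  also have "(\<Prod>j\<in>{N1+1..N1+m*k}. g j) = (\<Prod>l\<in>{1..m}. \<Prod>s<k. g (N1 + k*l - s))"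
    by (rule prod_blocks)
  finally show ?thesis unfolding g_def .
qed

lemma cfac_meta: "cfac t (- eta) = 0"
proof -
  have "t * exp (- eta) = inverse t" unfolding ht
    by (simp add: exp_add[symmetric] exp_minus[symmetric])
  thus ?thesis unfolding cfac_def by simp
qed

lemma P_nonlast: assumes x: "x \<in> D0 n N1 m k eta" and l: "1 \<le> l" "l \<le> m" and s: "1 \<le> s" "s < k"
  shows "P (N1 + k*l - s) x = 0"
proof -
  let ?i = "N1 + k*l - s"
  have kl': "k*l = k*(l-1) + k" using kl[OF l(1)] .
  have iS: "?i \<in> S0idx N1 m k" by (rule S0idxI[OF l, of "k - s"]) (use s kl' in auto)
  have "?i \<in> blk l" "Suc ?i \<in> blk l" using kl' s by auto
  hence mem: "Suc ?i \<in> {1..n+1} - {?i}" using blk_sub[OF l(2,1)] by auto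
  have "x ?i - x (Suc ?i) = eta" using D0_S0[OF x] iS by blast
  hence "x (Suc ?i) - x ?i = - eta" by (simp add: algebra_simps)
  hence "cfac t (x (Suc ?i) - x ?i) = 0" using cfac_meta by simp
  thus ?thesis unfolding P_def by (intro prod_zero) (use mem in auto)
qed

lemma exp_s_ne1: "1 \<le> s \<Longrightarrow> exp (of_nat s * eta) \<noteq> 1"
  by (rule expeta_ne1[OF hk hq])

lemma q_eq: "q = exp (of_nat k * eta / 2)" using hqq hk by simp

lemma blk_row: assumes x: "x \<in> Gset" and l: "1 \<le> l" "l \<le> m" and i: "i \<in> {1..n+1}"
  and ni: "\<forall>s<k. N1 + k*l - s \<noteq> i"
  shows "(\<Prod>s<k. (if N1 + k*l - s = i then 1 else cfac t (x (N1 + k*l - s) - x i)))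
       = cfac q (ycoord N1 k eta x l - x i)"
proof -
  have xD: "x \<in> D0 n N1 m k eta" using x unfolding Gset_def by auto
  have "(\<Prod>s<k. (if N1 + k*l - s = i then 1 else cfac t (x (N1 + k*l - s) - x i)))
      = (\<Prod>s<k. cfac (exp (eta/2)) ((x (N1 + k*l) - x i) + of_nat s * eta))"
    by (rule prod.cong[OF refl]) (use ni D0_blk[OF xD l] ht in \<open>auto simp: algebra_simps\<close>)
  also have "\<dots> = cfac (exp (of_nat k * eta / 2)) (x (N1 + k*l) - x i)"
  proof (rule tele_q)
    show "1 \<le> k" using k2 by simp
    show "\<forall>s<k. exp (x (N1 + k * l) - x i + of_nat s * eta) \<noteq> 1"
    proof (intro allI impI)
      fix s assume s: "s < k"
      have mem: "N1 + k*l - s \<in> {1..n+1} - {i}" using blk_mem[OF l(1) s] blk_sub[OF l(2,1)] ni s by auto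
      have "exp (x (N1 + k*l - s) - x i) \<noteq> 1" using x i mem unfolding Gset_def by blast
      thus "exp (x (N1 + k * l) - x i + of_nat s * eta) \<noteq> 1" using D0_blk[OF xD l s] by (simp add: algebra_simps)
    qed
  qed
  finally show ?thesis unfolding q_eq ycoord_eq[OF xD l] .
qed

lemma P_free: assumes x: "x \<in> Gset" and i: "i \<in> {1..N1}"
  shows "P i x = (\<Prod>j\<in>{1..N1}-{i}. cfac t (x j - x i)) * (\<Prod>l'=1..m. cfac q (ycoord N1 k eta x l' - x i))"
proof -
  have i': "i \<in> {1..n+1}" using i nN by auto
  have A: "(\<Prod>j\<in>{1..N1}. (if j = i then 1 else cfac t (x j - x i))) = (\<Prod>j\<in>{1..N1}-{i}. cfac t (x j - x i))"
  proof -
    have "(\<Prod>j\<in>{1..N1}. (if j = i then 1 else cfac t (x j - x i))) =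
      (if i = i then 1 else cfac t (x i - x i)) * (\<Prod>j\<in>{1..N1}-{i}. (if j = i then 1 else cfac t (x j - x i)))"
      by (rule prod.remove) (use i in auto)
    also have "\<dots> = (\<Prod>j\<in>{1..N1}-{i}. cfac t (x j - x i))" by (subst if_P[OF refl], subst mult_1_left, rule prod.cong) auto
    finally show ?thesis .
  qed
  have B: "(\<Prod>l\<in>{1..m}. \<Prod>s<k. (if N1 + k*l - s = i then 1 else cfac t (x (N1 + k*l - s) - x i)))
     = (\<Prod>l'=1..m. cfac q (ycoord N1 k eta x l' - x i))"
  proof (rule prod.cong[OF refl])
    fix l assume l: "l \<in> {1..m}"
    have "\<forall>s<k. N1 + k*l - s \<noteq> i" using blk_mem[of l] l i by fastforce
    then show "(\<Prod>s<k. (if N1 + k*l - s = i then 1 else cfac t (x (N1 + k*l - s) - x i))) = cfac q (ycoord N1 k eta x l - x i)"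
      using blk_row[OF x _ _ i'] l by auto
  qed
  show ?thesis unfolding P_split[OF i'] A B ..
qed

lemma P_last: assumes x: "x \<in> Gset" and l0: "1 \<le> l0" "l0 \<le> m"
  shows "P (N1 + k*l0) x = (q - inverse q) / (t - inverse t) *
    ((\<Prod>j=1..N1. cfac t (x j - ycoord N1 k eta x l0)) *
     (\<Prod>l'\<in>{1..m}-{l0}. cfac q (ycoord N1 k eta x l' - ycoord N1 k eta x l0)))"
proof -
  let ?i = "N1 + k*l0"
  have xD: "x \<in> D0 n N1 m k eta" using x unfolding Gset_def by auto
  have i': "?i \<in> {1..n+1}" using blk_mem[OF l0(1), of 0] blk_sub[OF l0(2,1)] k2 by auto
  have y0: "ycoord N1 k eta x l0 = x ?i" by (rule ycoord_eq[OF xD l0])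
  have A: "(\<Prod>j\<in>{1..N1}. (if j = ?i then 1 else cfac t (x j - x ?i))) = (\<Prod>j=1..N1. cfac t (x j - ycoord N1 k eta x l0))"
    unfolding y0 by (rule prod.cong[OF refl]) (use k2 l0 in auto)
  define h where "h l = (\<Prod>s<k. (if N1 + k*l - s = ?i then 1 else cfac t (x (N1 + k*l - s) - x ?i)))" for l
  have "(\<Prod>l\<in>{1..m}. h l) = h l0 * (\<Prod>l\<in>{1..m}-{l0}. h l)"
    by (rule prod.remove) (use l0 in auto)
  also have "h l0 = (\<Prod>s<k. if s = 0 then 1 else cfac (exp (eta/2)) (of_nat s * eta))"
    unfolding h_def
  proof (rule prod.cong[OF refl])
    fix s assume "s \<in> {..<k}"
    hence s: "s < k" by simp
    have "N1 + k*l0 - s = ?i \<longleftrightarrow> s = 0" using kl[OF l0(1)] s by auto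
    then show "(if N1 + k*l0 - s = ?i then 1 else cfac t (x (N1 + k*l0 - s) - x ?i)) =
      (if s = 0 then 1 else cfac (exp (eta/2)) (of_nat s * eta))"
      using D0_blk[OF xD l0 s] ht by simp
  qed
  also have "\<dots> = (q - inverse q) / (t - inverse t)"
    unfolding q_eq ht by (rule own_block) (use k2 exp_s_ne1 in auto)
  also have "(\<Prod>l\<in>{1..m}-{l0}. h l) = (\<Prod>l'\<in>{1..m}-{l0}. cfac q (ycoord N1 k eta x l' - ycoord N1 k eta x l0))"
  proof (rule prod.cong[OF refl])
    fix l assume l: "l \<in> {1..m}-{l0}"
    have ni: "\<forall>s<k. N1 + k*l - s \<noteq> ?i"
    proof (intro allI impI notI)
      fix s assume s: "s < k" and e: "N1 + k*l - s = ?i"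
      have "?i \<in> blk l" using blk_mem[of l s] s e l by auto
      moreover have "?i \<in> blk l0" using blk_mem[OF l0(1), of 0] k2 by auto
      ultimately have "l = l0" using blk_unique[of N1 k l ?i l0] l l0 by auto
      thus False using l by auto
    qed
    show "h l = cfac q (ycoord N1 k eta x l - ycoord N1 k eta x l0)"
      unfolding h_def y0 using blk_row[OF x _ _ i' ni] l by auto
  qed
  finally have B: "(\<Prod>l\<in>{1..m}. h l) = (q - inverse q) / (t - inverse t) * (\<Prod>l'\<in>{1..m}-{l0}. cfac q (ycoord N1 k eta x l' - ycoord N1 k eta x l0))" .
  show ?thesis unfolding P_split[OF i'] A h_def[symmetric] B by (simp add: mult_ac)
qed

lemma restr_main: assumes x: "x \<in> Gset"
  shows "restr n N1 m k (Mop n t hbar) lam' x = Mbar n N1 m k eta t q hbar lam' x"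
proof -
  have xD: "x \<in> D0 n N1 m k eta" using x unfolding Gset_def by auto
  let ?c = "(q - inverse q) / (t - inverse t)"
  let ?f = "\<lambda>i. if proj n N1 m k (Tsh n hbar hbar i) = lam' then P i x else 0"
  have "restr n N1 m k (Mop n t hbar) lam' x = (\<Sum>i=1..n+1. ?f i)" by (rule restr_eq)
  also have "{1..n+1} = {1..N1} \<union> {N1+1..N1+m*k}" using nN by auto
  also have "(\<Sum>i\<in>\<dots>. ?f i) = (\<Sum>i\<in>{1..N1}. ?f i) + (\<Sum>i\<in>{N1+1..N1+m*k}. ?f i)"
    by (rule sum.union_disjoint) auto
  also have "(\<Sum>i\<in>{N1+1..N1+m*k}. ?f i) = (\<Sum>l\<in>{1..m}. \<Sum>s<k. ?f (N1 + k*l - s))"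
    by (rule sum_blocks)
  also have "(\<Sum>i\<in>{1..N1}. ?f i) = (\<Sum>i=1..N1. if lam' = Tsh n hbar hbar i then
         (\<Prod>j\<in>{1..N1}-{i}. cfac t (x j - x i)) *
         (\<Prod>l'=1..m. cfac q (ycoord N1 k eta x l' - x i)) else 0)"
  proof (rule sum.cong[OF refl])
    fix i assume i: "i \<in> {1..N1}"
    show "?f i = (if lam' = Tsh n hbar hbar i then
         (\<Prod>j\<in>{1..N1}-{i}. cfac t (x j - x i)) *
         (\<Prod>l'=1..m. cfac q (ycoord N1 k eta x l' - x i)) else 0)"
      unfolding proj_free[OF i] P_free[OF x i] by auto
  qed
  also have "(\<Sum>l\<in>{1..m}. \<Sum>s<k. ?f (N1 + k*l - s)) = ?c * (\<Sum>l=1..m. if lam' = Tblock n N1 k hbar eta l then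
         (\<Prod>j=1..N1. cfac t (x j - ycoord N1 k eta x l)) *
         (\<Prod>l'\<in>{1..m}-{l}. cfac q (ycoord N1 k eta x l' - ycoord N1 k eta x l)) else 0)"
    unfolding sum_distrib_left
  proof (rule sum.cong[OF refl])
    fix l assume l: "l \<in> {1..m}"
    hence l': "1 \<le> l" "l \<le> m" by auto
    have "(\<Sum>s<k. ?f (N1 + k*l - s)) = (\<Sum>s<k. if lam' = Tblock n N1 k hbar eta l then P (N1 + k*l - s) x else 0)"
      by (rule sum.cong[OF refl]) (use proj_blk[OF l' blk_mem[OF l'(1)]] in auto)
    also have "\<dots> = (if lam' = Tblock n N1 k hbar eta l then (\<Sum>s<k. P (N1 + k*l - s) x) else 0)" by simp
    also have "(\<Sum>s<k. P (N1 + k*l - s) x) = P (N1 + k*l) x"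
    proof -
      have ksuc: "k = Suc (k - 1)" using k2 by simp
      have "(\<Sum>s<k. P (N1 + k*l - s) x) = P (N1 + k*l - 0) x + (\<Sum>s<k-1. P (N1 + k*l - Suc s) x)"
        by (subst ksuc, subst sum.lessThan_Suc_shift) simp
      also have "(\<Sum>s<k-1. P (N1 + k*l - Suc s) x) = 0"
        by (rule sum.neutral) (use P_nonlast[OF xD l'] in auto)
      finally show ?thesis by simp
    qed
    also have "P (N1 + k*l) x = ?c * ((\<Prod>j=1..N1. cfac t (x j - ycoord N1 k eta x l)) *
         (\<Prod>l'\<in>{1..m}-{l}. cfac q (ycoord N1 k eta x l' - ycoord N1 k eta x l)))"
      by (rule P_last[OF x l'])
    finally show "(\<Sum>s<k. ?f (N1 + k*l - s)) = ?c * (if lam' = Tblock n N1 k hbar eta l then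
         (\<Prod>j=1..N1. cfac t (x j - ycoord N1 k eta x l)) *
         (\<Prod>l'\<in>{1..m}-{l}. cfac q (ycoord N1 k eta x l' - ycoord N1 k eta x l)) else 0)" by simp
  qed
  finally show ?thesis unfolding Mbar_def .
qed

lemma open_U: "open {x::nat \<Rightarrow> complex. \<forall>i\<in>{1..n+1}. \<forall>j\<in>{1..n+1}-{i}. exp (x j - x i) \<noteq> 1}"
proof -
  have eq: "{x::nat \<Rightarrow> complex. \<forall>i\<in>{1..n+1}. \<forall>j\<in>{1..n+1}-{i}. exp (x j - x i) \<noteq> 1} =
     (\<Inter>i\<in>{1..n+1}. \<Inter>j\<in>{1..n+1}-{i}. {x. exp (x j - x i) \<noteq> 1})" by auto
  have "open {x::nat \<Rightarrow> complex. exp (x j - x i) \<noteq> 1}" for i j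
  proof (rule open_Collect_neq)
    show "continuous_on UNIV (\<lambda>x::nat \<Rightarrow> complex. exp (x j - x i))"
      by (intro continuous_on_exp continuous_on_diff continuous_on_product_coordinates)
  qed simp
  thus ?thesis unfolding eq by (intro open_INT) auto
qed

lemma openG: "openin (top_of_set (D0 n N1 m k eta)) Gset"
proof -
  have "Gset = D0 n N1 m k eta \<inter> {x::nat \<Rightarrow> complex. \<forall>i\<in>{1..n+1}. \<forall>j\<in>{1..n+1}-{i}. exp (x j - x i) \<noteq> 1}"
    unfolding Gset_def by auto
  thus ?thesis using open_U by (simp add: openin_open_Int)
qed

definition "grp j = (if j \<le> N1 then j else N1 + (j - N1 - 1) div k + 1)"

lemma grp_blk: assumes l: "1 \<le> l" and j: "j \<in> blk l" shows "grp j = N1 + l"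
proof -
  obtain r where r: "j - N1 - 1 = k*(l-1) + r" "r < k" using j kl[OF l]
    by (intro that[of "j - N1 - 1 - k*(l-1)"]) auto
  have "(j - N1 - 1) div k = l - 1" unfolding r using r(2) k2 by simp
  moreover have "\<not> j \<le> N1" using j by auto
  ultimately show ?thesis unfolding grp_def using l by simp
qed

lemma range_cases: assumes i: "i \<in> {1..n+1}" shows "i \<le> N1 \<or> (\<exists>l. 1 \<le> l \<and> l \<le> m \<and> i \<in> blk l)"
proof (cases "i \<le> N1")
  case False
  define r where "r = (i - N1 - 1) div k"
  have k0': "k > 0" using k2 by simp
  have a: "k * r \<le> i - N1 - 1" unfolding r_def by (simp add: mult.commute div_times_less_eq_dividend)
  have b: "i - N1 - 1 < k * r + k" unfolding r_def using k0'
    by (metis add.commute div_mult_mod_eq mod_less_divisor mult.commute nat_add_left_cancel_less)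
  have "i \<le> N1 + k * m" using i nN by (simp add: mult.commute)
  hence "i - N1 - 1 < k * m" using False by linarith
  hence "k * r < k * m" using a by linarith
  hence "r < m" by simp
  moreover have "i \<in> blk (r+1)" using a b False by auto
  ultimately show ?thesis by (intro disjI2 exI[of _ "r+1"]) auto
qed simp

lemma same_grp: assumes x: "x \<in> D0 n N1 m k eta" and i: "i \<in> {1..n+1}" and j: "j \<in> {1..n+1}"
  and g: "grp i = grp j" and ne: "i \<noteq> j"
  shows "exp (x j - x i) \<noteq> 1"
proof -
  have "\<exists>l. 1 \<le> l \<and> l \<le> m \<and> i \<in> blk l \<and> j \<in> blk l"
  proof -
    have gi: "grp i = i" if "i \<le> N1" for i using that unfolding grp_def by simp
    show ?thesis
    using range_cases[OF i] range_cases[OF j]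
    proof (elim disjE exE conjE)
      assume "i \<le> N1" "j \<le> N1" thus ?thesis using g ne gi by auto
    next
      fix l assume "i \<le> N1" "1 \<le> l" "j \<in> blk l" thus ?thesis using g gi grp_blk by auto
    next
      fix l assume "j \<le> N1" "1 \<le> l" "i \<in> blk l" thus ?thesis using g gi grp_blk by auto
    next
      fix l l' assume "1 \<le> l" "l \<le> m" "i \<in> blk l" "1 \<le> l'" "j \<in> blk l'"
      thus ?thesis using g grp_blk by auto
    qed
  qed
  then obtain l where l: "1 \<le> l" "l \<le> m" "i \<in> blk l" "j \<in> blk l" by blast
  show ?thesis
  proof (cases "i < j")
    case True
    have "x i = x j + of_nat (j - i) * eta" by (rule chain[OF D0_S0[OF x] l(1,2)]) (use l True in auto)
    hence "x j - x i = - (of_nat (j - i) * eta)" by simp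
    thus ?thesis using expeta_ne1'[OF hk hq, of "j - i"] True by simp
  next
    case False
    hence "j < i" using ne by simp
    have "x j = x i + of_nat (i - j) * eta" by (rule chain[OF D0_S0[OF x] l(1,2)]) (use l \<open>j < i\<close> in auto)
    hence "x j - x i = of_nat (i - j) * eta" by simp
    thus ?thesis using exp_s_ne1[of "i - j"] \<open>j < i\<close> by simp
  qed
qed

definition "wv j = (if j \<in> {1..n+1} then of_nat (grp j) - (\<Sum>i=1..n+1. of_nat (grp i)) / of_nat (n+1) else (0::complex))"

lemma wv_Vbar: "wv \<in> Vbar n N1 m k"
proof -
  have "(\<Sum>j=1..n+1. wv j) = (\<Sum>j=1..n+1. of_nat (grp j) - (\<Sum>i=1..n+1. of_nat (grp i)) / of_nat (n+1))"
    unfolding wv_def by (rule sum.cong) auto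
  also have "\<dots> = (\<Sum>j=1..n+1. of_nat (grp j)) - (\<Sum>j=1..n+1. (\<Sum>i=1..n+1. of_nat (grp i)) / (of_nat (n+1) :: complex))"
    by (rule sum_subtractf)
  also have "\<dots> = 0" by (simp del: of_nat_Suc)
  finally have S: "(\<Sum>j=1..n+1. wv j) = 0" .
  have B: "\<forall>j\<in>S0idx N1 m k. wv j = wv (Suc j)"
  proof
    fix j assume "j \<in> S0idx N1 m k"
    then obtain l where l: "1 \<le> l" "l \<le> m" "j \<in> blk l" "Suc j \<in> blk l" using S0idx_props by blast
    have "grp j = grp (Suc j)" using grp_blk[OF l(1)] l by simp
    thus "wv j = wv (Suc j)" using blk_sub[OF l(2,1)] l unfolding wv_def by auto
  qed
  show ?thesis unfolding Vbar_def Vsp_def using S B by (auto simp: wv_def)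
qed

lemma dense: assumes x: "x \<in> D0 n N1 m k eta" shows "x \<in> closure Gset"
proof -
  define phi where "phi e = (\<lambda>j. x j + of_real e * wv j)" for e :: real
  define Bad where "Bad = (\<Union>p\<in>{p. fst p \<in> {1..n+1} \<and> snd p \<in> {1..n+1} \<and> grp (fst p) \<noteq> grp (snd p)}.
      {e::real. exp ((x (snd p) - x (fst p)) + of_real e * (wv (snd p) - wv (fst p))) = 1})"
  have cB: "countable Bad" unfolding Bad_def
  proof (rule countable_UN)
    show "countable {p. fst p \<in> {1..n+1} \<and> snd p \<in> {1..n+1} \<and> grp (fst p) \<noteq> grp (snd p)}"
      by (rule countable_finite, rule finite_subset[of _ "{1..n+1} \<times> {1..n+1}"]) auto
  next
    fix p assume p: "p \<in> {p. fst p \<in> {1..n+1} \<and> snd p \<in> {1..n+1} \<and> grp (fst p) \<noteq> grp (snd p)}"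
    have "wv (snd p) - wv (fst p) = of_nat (grp (snd p)) - of_nat (grp (fst p))" using p unfolding wv_def by auto
    also have "\<dots> \<noteq> 0" using p by simp
    finally show "countable {e::real. exp ((x (snd p) - x (fst p)) + of_real e * (wv (snd p) - wv (fst p))) = 1}"
      by (rule countable_bad)
  qed
  have "\<exists>e. e \<in> {0<..<inverse (real (Suc N))} \<and> e \<notin> Bad" for N
  proof (rule ccontr)
    assume "\<nexists>e. e \<in> {0<..<inverse (real (Suc N))} \<and> e \<notin> Bad"
    hence "{0<..<inverse (real (Suc N))} \<subseteq> Bad" by auto
    hence "countable {0<..<inverse (real (Suc N))}" using cB countable_subset by blast
    moreover have "uncountable {0<..<inverse (real (Suc N))}" by (subst uncountable_open_interval) simp
    ultimately show False by blast
  qed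
  then obtain eps where eps: "\<And>N. eps N \<in> {0<..<inverse (real (Suc N))} \<and> eps N \<notin> Bad" by metis
  have lim: "eps \<longlonglongrightarrow> 0"
  proof (rule tendsto_sandwich[of "\<lambda>_. 0" _ _ "\<lambda>N. inverse (real (Suc N))"])
    show "\<forall>\<^sub>F N in sequentially. 0 \<le> eps N" using eps by (auto intro: always_eventually less_imp_le)
    show "\<forall>\<^sub>F N in sequentially. eps N \<le> inverse (real (Suc N))" using eps by (auto intro: always_eventually less_imp_le)
  qed (simp_all only: LIMSEQ_inverse_real_of_nat tendsto_const)
  have cont: "continuous_on UNIV phi" unfolding phi_def
    by (intro continuous_on_coordinatewise_then_product continuous_intros)
  hence "isCont phi 0" by (simp add: continuous_on_eq_continuous_at)
  from isCont_tendsto_compose[OF this lim] have L: "(\<lambda>N. phi (eps N)) \<longlonglongrightarrow> phi 0" .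
  have phi0: "phi 0 = x" unfolding phi_def by simp
  have inG: "phi (eps N) \<in> Gset" for N
  proof -
    have D: "phi (eps N) \<in> D0 n N1 m k eta" unfolding phi_def
      by (rule D0_add[OF x Vbar_scale[OF wv_Vbar]])
    have "exp (phi (eps N) j - phi (eps N) i) \<noteq> 1" if i: "i \<in> {1..n+1}" and j: "j \<in> {1..n+1}-{i}" for i j
    proof (cases "grp i = grp j")
      case True
      hence "wv i = wv j" using i j unfolding wv_def by auto
      hence "phi (eps N) j - phi (eps N) i = x j - x i" unfolding phi_def by simp
      thus ?thesis using same_grp[OF x i _ True] j by auto
    next
      case False
      have "eps N \<notin> {e::real. exp ((x j - x i) + of_real e * (wv j - wv i)) = 1}"
        using eps[of N] i j False unfolding Bad_def by auto
      moreover have "phi (eps N) j - phi (eps N) i = (x j - x i) + of_real (eps N) * (wv j - wv i)"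
        unfolding phi_def by (simp add: algebra_simps)
      ultimately show ?thesis by simp
    qed
    thus ?thesis using D unfolding Gset_def by auto
  qed
  show ?thesis
  proof (rule Lim_in_closed_set[OF closed_closure _ _ L[unfolded phi0]])
    show "\<forall>\<^sub>F N in sequentially. phi (eps N) \<in> closure Gset" using inG closure_subset by (auto intro: always_eventually)
  qed simp
qed

end

theorem mainTheorem14:
  fixes n N1 m k :: nat and eta hbar t q :: complex
  assumes "k \<ge> 2" and "m \<ge> 1" and "n + 1 = N1 + m * k"
    and "hbar = of_nat k * eta"
    and "\<forall>r\<in>\<rat>. hbar \<noteq> of_real pi * \<i> * r"
    and "t = exp (eta / 2)" and "q = exp (hbar / 2)"
  shows "\<exists>G. G \<subseteq> D0 n N1 m k eta
           \<and> openin (top_of_set (D0 n N1 m k eta)) G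
           \<and> D0 n N1 m k eta \<subseteq> closure G
           \<and> (\<forall>x\<in>G. \<forall>i\<in>{1..n+1}. \<forall>j\<in>{1..n+1}-{i}. exp (x j - x i) \<noteq> 1)
           \<and> (\<forall>lam'. \<forall>x\<in>G. restr n N1 m k (Mop n t hbar) lam' x
                               = Mbar n N1 m k eta t q hbar lam' x)"
proof -
  interpret S: setting n N1 m k eta hbar t q using assms by unfold_locales
  show ?thesis
  proof (intro exI[of _ S.Gset] conjI)
    show "S.Gset \<subseteq> D0 n N1 m k eta" unfolding S.Gset_def by auto
    show "openin (top_of_set (D0 n N1 m k eta)) S.Gset" by (rule S.openG)
    show "D0 n N1 m k eta \<subseteq> closure S.Gset" using S.dense by auto
    show "\<forall>x\<in>S.Gset. \<forall>i\<in>{1..n+1}. \<forall>j\<in>{1..n+1}-{i}. exp (x j - x i) \<noteq> 1" unfolding S.Gset_def by auto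
    show "\<forall>lam'. \<forall>x\<in>S.Gset. restr n N1 m k (Mop n t hbar) lam' x = Mbar n N1 m k eta t q hbar lam' x"
      using S.restr_main by auto
  qed
qed

end
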